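(* Assume $F$ is $K$-smooth with $\ell\in\mathrm{int}(K)$ and strongly $K$-convex with $\mu\in\mathrm{int}(K)$. Let $C_\ell:=\{c^*\in K^*:\langle c^*,\ell\rangle=1\}$ and let $\{x^k\}$ be generated from $x^0$ by $$x^{k+1}:=\arg\min_{x\in\mathbb{R}^n}\max_{c^*\in C_\ell}\langle c^*,JF(x^k)(x-x^k)\rangle+\tfrac12\|x-x^k\|^2,$$ assumed not to terminate ($x^{k+1}\ne x^k$ for all $k$). Then: (i) $\{x^k\}$ converges to an efficient solution $x^*$ of $\min_K F(x)$; (ii) $\|x^{k+1}-x^*\|\le\sqrt{1-1/\kappa_{F,\preceq_K}}\,\|x^k-x^*\|$ for all $k\ge0$, where $\kappa_{F,\preceq_K}:=\max_{c^*\in K^*\setminus\{0\}}\frac{\langle c^*,\ell\rangle}{\langle c^*,\mu\rangle}$.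
   Context: $K\subset\mathbb{R}^m$ closed convex pointed cone with nonempty interior; $y\preceq_K y'$ iff $y'-y\in K$. $K^*=\{c:\langle c,y\rangle\ge0\ \forall y\in K\}$. $F:\mathbb{R}^n\to\mathbb{R}^m$ differentiable with Jacobian $JF$. Strongly $K$-convex with $\mu\in K$: $JF(x)(y-x)+\tfrac12\|y-x\|^2\mu\preceq_K F(y)-F(x)$ $\forall x,y$. $K$-smooth with $\ell\in K$: $F(y)-F(x)\preceq_K JF(x)(y-x)+\tfrac12\|y-x\|^2\ell$ $\forall x,y$. $x^*$ is efficient if there is no $x$ with $F(x)\preceq_K F(x^* )$ and $F(x)\neq F(x^* )$. *)

theory Defs
  imports "HOL-Analysis.Analysis"
begin

definition proper_cone :: "'b::euclidean_space set \<Rightarrow> bool" where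
  "proper_cone K \<longleftrightarrow> cone K \<and> convex K \<and> closed K \<and>
     K \<inter> uminus ` K = {0} \<and> interior K \<noteq> {}"

definition Kle :: "'b::euclidean_space set \<Rightarrow> 'b \<Rightarrow> 'b \<Rightarrow> bool" where
  "Kle K y y' \<longleftrightarrow> y' - y \<in> K"

definition dual_cone :: "'b::euclidean_space set \<Rightarrow> 'b set" where
  "dual_cone K = {c. \<forall>y\<in>K. inner c y \<ge> 0}"

definition strongly_K_convex ::
  "'b::euclidean_space set \<Rightarrow> ('a::euclidean_space \<Rightarrow> 'b) \<Rightarrow> ('a \<Rightarrow> 'a \<Rightarrow> 'b) \<Rightarrow> 'b \<Rightarrow> bool" where
  "strongly_K_convex K F JF \<mu> \<longleftrightarrow>
     (\<forall>x y. Kle K (JF x (y - x) + ((1/2) * (norm (y - x))\<^sup>2) *\<^sub>R \<mu>) (F y - F x))"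

definition K_smooth ::
  "'b::euclidean_space set \<Rightarrow> ('a::euclidean_space \<Rightarrow> 'b) \<Rightarrow> ('a \<Rightarrow> 'a \<Rightarrow> 'b) \<Rightarrow> 'b \<Rightarrow> bool" where
  "K_smooth K F JF l \<longleftrightarrow>
     (\<forall>x y. Kle K (F y - F x) (JF x (y - x) + ((1/2) * (norm (y - x))\<^sup>2) *\<^sub>R l))"

definition efficient ::
  "'b::euclidean_space set \<Rightarrow> ('a \<Rightarrow> 'b) \<Rightarrow> 'a \<Rightarrow> bool" where
  "efficient K F xs \<longleftrightarrow> \<not> (\<exists>x. Kle K (F x) (F xs) \<and> F x \<noteq> F xs)"

definition C_set :: "'b::euclidean_space set \<Rightarrow> 'b \<Rightarrow> 'b set" where
  "C_set K l = {c \<in> dual_cone K. inner c l = 1}"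

text \<open>Subproblem objective at the iterate xk:
  max over c in C_l of <c, JF(xk)(x - xk)> + 1/2 |x - xk|^2 (the max is attained; written as Sup).\<close>
definition subproblem_obj ::
  "'b::euclidean_space set \<Rightarrow> ('a::euclidean_space \<Rightarrow> 'a \<Rightarrow> 'b) \<Rightarrow> 'b \<Rightarrow> 'a \<Rightarrow> 'a \<Rightarrow> real" where
  "subproblem_obj K JF l xk x =
     (SUP c\<in>C_set K l. inner c (JF xk (x - xk))) + (1/2) * (norm (x - xk))\<^sup>2"

text \<open>Condition number kappa = max over c in K^* minus 0 of <c,l>/<c,mu> (attained; written as Sup).\<close>
definition kappa :: "'b::euclidean_space set \<Rightarrow> 'b \<Rightarrow> 'b \<Rightarrow> real" where
  "kappa K l \<mu> = (SUP c\<in>dual_cone K - {0}. inner c l / inner c \<mu>)"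

end

theory Submission imports Defs begin

lemma interior_dual:
  fixes K :: "'b::euclidean_space set"
  assumes "y \<in> interior K"
  shows "\<exists>e>0. \<forall>c\<in>dual_cone K. e * norm c \<le> inner c y"
proof -
  obtain e where e: "e > 0" "ball y e \<subseteq> K" using assms mem_interior by blast
  have "(e/2) * norm c \<le> inner c y" if c: "c \<in> dual_cone K" for c
  proof (cases "c = 0")
    case True then show ?thesis by simp
  next
    case False
    let ?u = "y - ((e/2) / norm c) *\<^sub>R c"
    have "dist y ?u = e/2" using False e by (simp add: dist_norm)
    then have "?u \<in> K" using e by auto
    then have "0 \<le> inner c ?u" using c by (auto simp: dual_cone_def)
    also have "inner c ?u = inner c y - (e/2) * norm c"
      using False by (simp add: inner_diff_right power2_norm_eq_inner[symmetric] power2_eq_square)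
    finally show ?thesis by simp
  qed
  then show ?thesis using e by (intro exI[of _ "e/2"]) auto
qed

lemma dual_nonzero:
  fixes K :: "'b::euclidean_space set"
  assumes "proper_cone K"
  shows "\<exists>c\<in>dual_cone K. c \<noteq> 0"
proof -
  have cone: "cone K" and cvx: "convex K" and cl: "closed K" and pt: "K \<inter> uminus ` K = {0}"
    and ne: "interior K \<noteq> {}" using assms by (auto simp: proper_cone_def)
  obtain y0 where "y0 \<in> K" using ne interior_subset by blast
  then have zK: "0 \<in> K" using cone unfolding cone_def by (metis scaleR_zero_left order_refl)
  obtain z where z: "z \<notin> K"
  proof (cases "K = UNIV")
    case True
    obtain b :: 'b where b: "b \<in> Basis" using nonempty_Basis by blast
    then have "b \<noteq> 0" by auto
    moreover have "b \<in> K \<inter> uminus ` K" using True by (auto intro: image_eqI[of _ _ "-b"])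
    ultimately show ?thesis using pt by auto
  next
    case False then show ?thesis using that by auto
  qed
  obtain a b where ab: "inner a z < b" "\<forall>x\<in>K. b < inner a x"
    using separating_hyperplane_closed_point[OF cvx cl z] by blast
  have b0: "b < 0" using ab zK by fastforce
  have "0 \<le> inner a x" if x: "x \<in> K" for x
  proof (rule ccontr)
    assume "\<not> 0 \<le> inner a x"
    then have neg: "inner a x < 0" by simp
    define t where "t = b / inner a x"
    have "t \<ge> 0" using neg b0 by (simp add: t_def divide_nonpos_neg)
    then have "t *\<^sub>R x \<in> K" using cone x unfolding cone_def by blast
    then have "b < t * inner a x" using ab by auto
    also have "t * inner a x = b" using neg by (simp add: t_def)
    finally show False by simp
  qed
  moreover have "a \<noteq> 0" using ab b0 by auto
  ultimately show ?thesis by (auto simp: dual_cone_def)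
qed

lemma small_t:
  fixes a b :: real
  assumes "\<And>t. 0 < t \<Longrightarrow> t \<le> 1 \<Longrightarrow> 0 \<le> a + t * b" "0 \<le> b"
  shows "0 \<le> a"
proof (rule ccontr)
  assume "\<not> 0 \<le> a"
  define t where "t = min 1 (-a / (2*b+1))"
  have t: "0 < t" "t \<le> 1" using \<open>\<not> 0 \<le> a\<close> assms(2) by (auto simp: t_def divide_neg_pos)
  have "t * b \<le> (-a / (2*b+1)) * b" using assms(2) by (intro mult_right_mono) (auto simp: t_def)
  also have "\<dots> < -a" using \<open>\<not> 0 \<le> a\<close> assms(2) mult_nonpos_nonneg[of a b] by (simp add: field_simps)
  finally show False using assms(1)[OF t] by simp
qed

lemma sqrt_step:
  fixes a b s :: real
  assumes "0 \<le> a" "0 \<le> b" "a^2 \<le> s * b^2"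
  shows "a \<le> sqrt s * b"
proof (cases "s \<ge> 0")
  case True
  have "sqrt (a^2) \<le> sqrt (s * b^2)" using assms(3) real_sqrt_le_mono by blast
  then show ?thesis using assms True by (simp add: real_sqrt_mult)
next
  case False
  have "s * b^2 \<le> 0" using False by (simp add: mult_nonpos_nonneg)
  then have "a^2 \<le> 0" using assms by linarith
  then have "a = 0" by simp
  then have "b^2 \<le> 0" using assms False by (smt (verit) mult_neg_pos zero_le_power2 power2_less_0)
  then have "b = 0" by simp
  then show ?thesis using \<open>a = 0\<close> by simp
qed

lemma norm_add_sq:
  fixes a b :: "'a::real_inner"
  shows "(norm (a + t *\<^sub>R b))\<^sup>2 = (norm a)\<^sup>2 + 2 * t * inner a b + t^2 * (norm b)\<^sup>2"
  unfolding power2_norm_eq_inner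
  by (simp add: inner_add_left inner_add_right inner_commute algebra_simps power2_eq_square)

lemma norm_diff_sq:
  fixes a b :: "'a::real_inner"
  shows "(norm (a - b))\<^sup>2 = (norm a)\<^sup>2 - 2 * inner a b + (norm b)\<^sup>2"
  unfolding power2_norm_eq_inner
  by (simp add: inner_diff_left inner_diff_right inner_commute algebra_simps)

lemma contr_conv:
  fixes x :: "nat \<Rightarrow> 'a::real_normed_vector"
  assumes q: "0 \<le> q" "q < 1" and c: "\<And>k. norm (x (Suc k) - p) \<le> q * norm (x k - p)"
  shows "x \<longlonglongrightarrow> p"
proof -
  have b: "norm (x k - p) \<le> q ^ k * norm (x 0 - p)" for k
  proof (induction k)
    case 0 then show ?case by simp
  next
    case (Suc k)
    have "norm (x (Suc k) - p) \<le> q * norm (x k - p)" by (rule c)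
    also have "\<dots> \<le> q * (q ^ k * norm (x 0 - p))" using Suc q by (intro mult_left_mono) auto
    finally show ?case by (simp add: mult.assoc)
  qed
  have "(\<lambda>k. q ^ k) \<longlonglongrightarrow> 0" using q by (intro LIMSEQ_power_zero) auto
  then have lim0: "(\<lambda>k. q ^ k * norm (x 0 - p)) \<longlonglongrightarrow> 0"
    by (rule tendsto_mult_left_zero)
  have ev: "\<forall>\<^sub>F k in sequentially. norm (x k - p) \<le> q ^ k * norm (x 0 - p)"
    using b by (intro always_eventually) simp
  have "(\<lambda>k. x k - p) \<longlonglongrightarrow> 0" by (rule Lim_null_comparison[OF ev lim0])
  then show ?thesis by (simp only: LIM_zero_iff)
qed

theorem lemma4p3:
  fixes K :: "'b::euclidean_space set"
    and F :: "'a::euclidean_space \<Rightarrow> 'b"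
    and JF :: "'a \<Rightarrow> 'a \<Rightarrow> 'b"
    and l \<mu> :: 'b
    and x :: "nat \<Rightarrow> 'a"
  assumes K: "proper_cone K"
    and deriv: "\<And>z. (F has_derivative JF z) (at z)"
    and smooth: "K_smooth K F JF l" and l_int: "l \<in> interior K"
    and sconv: "strongly_K_convex K F JF \<mu>" and mu_int: "\<mu> \<in> interior K"
    and step: "\<And>k z. subproblem_obj K JF l (x k) (x (Suc k)) \<le> subproblem_obj K JF l (x k) z"
    and nonterm: "\<And>k. x (Suc k) \<noteq> x k"
  shows "\<exists>xs. x \<longlonglongrightarrow> xs \<and> efficient K F xs \<and>
           (\<forall>k. norm (x (Suc k) - xs) \<le> sqrt (1 - 1 / kappa K l \<mu>) * norm (x k - xs))"
proof -
  define C where "C = C_set K l"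
  define \<phi> where "\<phi> = (\<lambda>k v. SUP c\<in>C. inner c (JF (x k) v))"
  have obj: "subproblem_obj K JF l (x k) z = \<phi> k (z - x k) + (1/2) * (norm (z - x k))\<^sup>2" for k z
    by (simp add: subproblem_obj_def \<phi>_def C_def)
  have lin: "linear (JF z)" for z using deriv has_derivative_linear by blast
  have Cdual: "c \<in> dual_cone K" "inner c l = 1" if "c \<in> C" for c
    using that by (auto simp: C_def C_set_def)
  obtain el where el: "el > 0" "\<forall>c\<in>dual_cone K. el * norm c \<le> inner c l"
    using interior_dual[OF l_int] by blast
  obtain em where em: "em > 0" "\<forall>c\<in>dual_cone K. em * norm c \<le> inner c \<mu>"
    using interior_dual[OF mu_int] by blast
  have Cbound: "norm c \<le> 1 / el" if "c \<in> C" for c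
  proof -
    have "el * norm c \<le> 1" using el(2) Cdual[OF that] by metis
    then show ?thesis using el(1) by (simp add: field_simps mult.commute)
  qed
  obtain c1 where c1: "c1 \<in> dual_cone K" "c1 \<noteq> 0" using dual_nonzero[OF K] by blast
  have "inner c1 l > 0" using el c1 by (smt (verit) mult_pos_pos zero_less_norm_iff)
  define c0 where "c0 = (1 / inner c1 l) *\<^sub>R c1"
  have c0C: "c0 \<in> C"
  proof -
    have "c0 \<in> dual_cone K" using c1 \<open>inner c1 l > 0\<close>
      by (auto simp: c0_def dual_cone_def)
    moreover have "inner c0 l = 1" using \<open>inner c1 l > 0\<close> by (simp add: c0_def)
    ultimately show ?thesis by (simp add: C_def C_set_def)
  qed
  then have Cne: "C \<noteq> {}" by blast
  have bdd: "bdd_above ((\<lambda>c. inner c v) ` C)" for v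
  proof (rule bdd_aboveI2)
    fix c assume "c \<in> C"
    have "inner c v \<le> norm c * norm v" using norm_cauchy_schwarz by blast
    also have "\<dots> \<le> (1/el) * norm v" using Cbound[OF \<open>c \<in> C\<close>] by (intro mult_right_mono) auto
    finally show "inner c v \<le> (1/el) * norm v" .
  qed
  have phi_upper: "inner c (JF (x k) v) \<le> \<phi> k v" if "c \<in> C" for c k v
    unfolding \<phi>_def using that bdd[of "JF (x k) v"] by (intro cSUP_upper) auto
  have phi_least: "\<phi> k v \<le> M" if "\<And>c. c \<in> C \<Longrightarrow> inner c (JF (x k) v) \<le> M" for k v M
    unfolding \<phi>_def using that Cne by (intro cSUP_least) auto
  have phi0: "\<phi> k 0 = 0" for k
    using Cne by (simp add: \<phi>_def linear_0[OF lin])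
  define \<kappa> where "\<kappa> = kappa K l \<mu>"
  have kap: "1 / inner c \<mu> \<le> \<kappa>" "inner c \<mu> > 0" if "c \<in> C" for c
  proof -
    have cne: "c \<noteq> 0" using Cdual[OF that] by auto
    show mpos: "inner c \<mu> > 0" using em Cdual[OF that] cne by (smt (verit) mult_pos_pos zero_less_norm_iff)
    have "bdd_above ((\<lambda>c. inner c l / inner c \<mu>) ` (dual_cone K - {0}))"
    proof (rule bdd_aboveI2)
      fix c assume c: "c \<in> dual_cone K - {0}"
      then have "em * norm c \<le> inner c \<mu>" "norm c > 0" using em by auto
      then have pos: "inner c \<mu> > 0" using em by (smt (verit) mult_pos_pos)
      have "inner c l \<le> norm c * norm l" using norm_cauchy_schwarz by blast
      then have "inner c l / inner c \<mu> \<le> norm c * norm l / inner c \<mu>"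
        using pos by (intro divide_right_mono) auto
      also have "\<dots> \<le> norm c * norm l / (em * norm c)"
        using pos \<open>em * norm c \<le> inner c \<mu>\<close> \<open>norm c > 0\<close> em
        by (intro divide_left_mono) auto
      also have "\<dots> = norm l / em" using \<open>norm c > 0\<close> by simp
      finally show "inner c l / inner c \<mu> \<le> norm l / em" .
    qed
    then have "inner c l / inner c \<mu> \<le> \<kappa>"
      unfolding \<kappa>_def kappa_def using Cdual[OF that] cne by (intro cSUP_upper) auto
    then show "1 / inner c \<mu> \<le> \<kappa>" using Cdual[OF that] by simp
  qed
  have kpos: "\<kappa> > 0" using kap[OF c0C] by (smt (verit) divide_pos_pos)
  have kinv: "1 / \<kappa> \<le> inner c \<mu>" if "c \<in> C" for c
    using kap[OF that] kpos by (simp add: field_simps)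
  have dual_le: "0 \<le> inner c v" if "c \<in> C" "v \<in> K" for c v
    using Cdual(1)[OF that(1)] that(2) by (auto simp: dual_cone_def)
  have E: "inner c (F (x (Suc k))) - inner c (F (x k))
      \<le> \<phi> k (x (Suc k) - x k) + (1/2) * (norm (x (Suc k) - x k))\<^sup>2" if c: "c \<in> C" for c k
  proof -
    define d where "d = x (Suc k) - x k"
    have "0 \<le> inner c (JF (x k) d + ((1/2) * (norm d)\<^sup>2) *\<^sub>R l - (F (x (Suc k)) - F (x k)))"
      using smooth dual_le[OF c] by (auto simp: K_smooth_def Kle_def d_def)
    then have "inner c (F (x (Suc k))) - inner c (F (x k)) \<le> inner c (JF (x k) d) + (1/2) * (norm d)\<^sup>2"
      using Cdual(2)[OF c] by (simp add: inner_diff_right inner_add_right)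
    also have "\<dots> \<le> \<phi> k d + (1/2) * (norm d)\<^sup>2" using phi_upper[OF c] by simp
    finally show ?thesis by (simp add: d_def)
  qed
  have E0: "\<phi> k (x (Suc k) - x k) + (1/2) * (norm (x (Suc k) - x k))\<^sup>2 \<le> 0" for k
    using step[of k "x k"] by (simp add: obj phi0)
  have desc: "inner c (F (x (Suc k))) \<le> inner c (F (x k))" if "c \<in> C" for c k
    using E[OF that, of k] E0[of k] by linarith
  have descm: "inner c (F (x n)) \<le> inner c (F (x m))" if "c \<in> C" "m \<le> n" for c m n
    using that(2)
  proof (induction n rule: dec_induct)
    case base then show ?case by simp
  next
    case (step n) then show ?case using desc[OF that(1), of n] by linarith
  qed
  have key: "(norm (x (Suc k) - p))\<^sup>2 \<le> (1 - 1/\<kappa>) * (norm (x k - p))\<^sup>2"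
    if P: "\<And>j c. c \<in> C \<Longrightarrow> inner c (F p) \<le> inner c (F (x j))" for p k
  proof -
    define d where "d = x (Suc k) - x k"
    define w where "w = p - x k"
    define A where "A = JF (x k)"
    have linA: "linear A" using lin by (simp add: A_def)
    have convx: "\<phi> k (d + t *\<^sub>R (w - d)) \<le> (1 - t) * \<phi> k d + t * \<phi> k w"
      if t: "0 \<le> t" "t \<le> 1" for t
    proof (rule phi_least)
      fix c assume c: "c \<in> C"
      have "inner c (JF (x k) (d + t *\<^sub>R (w - d))) = (1 - t) * inner c (A d) + t * inner c (A w)"
        using linA by (simp add: A_def linear_add linear_diff linear_scale inner_add_right inner_diff_right algebra_simps)
      also have "\<dots> \<le> (1 - t) * \<phi> k d + t * \<phi> k w"
        using phi_upper[OF c, of k d] phi_upper[OF c, of k w] t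
        by (intro add_mono mult_left_mono) (auto simp: A_def)
      finally show "inner c (JF (x k) (d + t *\<^sub>R (w - d))) \<le> (1 - t) * \<phi> k d + t * \<phi> k w" .
    qed
    have opt: "0 \<le> (\<phi> k w - \<phi> k d + inner d (w - d)) + t * ((1/2) * (norm (w - d))\<^sup>2)"
      if t: "0 < t" "t \<le> 1" for t
    proof -
      have "\<phi> k d + (1/2) * (norm d)\<^sup>2 \<le> \<phi> k (d + t *\<^sub>R (w - d)) + (1/2) * (norm (d + t *\<^sub>R (w - d)))\<^sup>2"
        using step[of k "x k + (d + t *\<^sub>R (w - d))"] unfolding obj d_def[symmetric] by simp
      also have "\<dots> \<le> (1 - t) * \<phi> k d + t * \<phi> k w + (1/2) * (norm (d + t *\<^sub>R (w - d)))\<^sup>2"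
        using convx[of t] t by simp
      also have "(norm (d + t *\<^sub>R (w - d)))\<^sup>2 = (norm d)\<^sup>2 + 2 * t * inner d (w - d) + t^2 * (norm (w - d))\<^sup>2"
        by (rule norm_add_sq)
      finally have ch: "\<phi> k d + (1/2) * (norm d)\<^sup>2 \<le> (1 - t) * \<phi> k d + t * \<phi> k w + (1/2) * ((norm d)\<^sup>2 + 2 * t * inner d (w - d) + t^2 * (norm (w - d))\<^sup>2)" .
      have e1: "(1 - t) * \<phi> k d = \<phi> k d - t * \<phi> k d" by (simp add: algebra_simps)
      have e2: "(1/2) * ((norm d)\<^sup>2 + 2 * t * inner d (w - d) + t^2 * (norm (w - d))\<^sup>2) = (1/2) * (norm d)\<^sup>2 + t * inner d (w - d) + t * (t * ((1/2) * (norm (w - d))\<^sup>2))"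
        by (simp add: algebra_simps power2_eq_square)
      have e3: "t * ((\<phi> k w - \<phi> k d + inner d (w - d)) + t * ((1/2) * (norm (w - d))\<^sup>2)) = t * \<phi> k w - t * \<phi> k d + t * inner d (w - d) + t * (t * ((1/2) * (norm (w - d))\<^sup>2))"
        by (simp add: algebra_simps)
      have "0 \<le> t * ((\<phi> k w - \<phi> k d + inner d (w - d)) + t * ((1/2) * (norm (w - d))\<^sup>2))"
        using ch e1 e2 e3 by linarith
      then show ?thesis using t by (simp add: zero_le_mult_iff)
    qed
    have opt2: "0 \<le> \<phi> k w - \<phi> k d + inner d (w - d)"
      by (rule small_t[OF opt]) auto
    have bnd: "\<phi> k w \<le> \<phi> k d + (1/2) * (norm d)\<^sup>2 - (norm w)\<^sup>2 / (2 * \<kappa>)"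
    proof (rule phi_least)
      fix c assume c: "c \<in> C"
      have "0 \<le> inner c (F p - F (x k) - (JF (x k) w + ((1/2) * (norm w)\<^sup>2) *\<^sub>R \<mu>))"
        using sconv dual_le[OF c] by (auto simp: strongly_K_convex_def Kle_def w_def)
      then have "inner c (JF (x k) w) \<le> inner c (F p) - inner c (F (x k)) - (1/2) * (norm w)\<^sup>2 * inner c \<mu>"
        by (simp add: inner_diff_right inner_add_right)
      also have "\<dots> \<le> inner c (F (x (Suc k))) - inner c (F (x k)) - (1/2) * (norm w)\<^sup>2 * (1 / \<kappa>)"
      proof -
        have "(1/2) * (norm w)\<^sup>2 * (1 / \<kappa>) \<le> (1/2) * (norm w)\<^sup>2 * inner c \<mu>"
          using kinv[OF c] by (intro mult_left_mono) auto
        then show ?thesis using P[OF c, of "Suc k"] by linarith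
      qed
      also have "\<dots> \<le> \<phi> k d + (1/2) * (norm d)\<^sup>2 - (norm w)\<^sup>2 / (2 * \<kappa>)"
        using E[OF c, of k] by (simp add: d_def)
      finally show "inner c (JF (x k) w) \<le> \<phi> k d + (1/2) * (norm d)\<^sup>2 - (norm w)\<^sup>2 / (2 * \<kappa>)" .
    qed
    have "(norm (x (Suc k) - p))\<^sup>2 = (norm (d - w))\<^sup>2" by (simp add: d_def w_def)
    also have "\<dots> = (norm d)\<^sup>2 - 2 * inner d w + (norm w)\<^sup>2"
      by (rule norm_diff_sq)
    also have "\<dots> \<le> (1 - 1/\<kappa>) * (norm w)\<^sup>2"
    proof -
      have i1: "inner d (w - d) = inner d w - (norm d)\<^sup>2" by (simp add: inner_diff_right power2_norm_eq_inner)
      have i2: "(1 - 1/\<kappa>) * (norm w)\<^sup>2 = (norm w)\<^sup>2 - (norm w)\<^sup>2 / \<kappa>" by (simp add: algebra_simps)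
      have i3: "(norm w)\<^sup>2 / (2 * \<kappa>) = ((norm w)\<^sup>2 / \<kappa>) / 2" by simp
      show ?thesis using opt2 bnd i1 i2 i3 by linarith
    qed
    finally show ?thesis by (simp add: w_def norm_minus_commute)
  qed
  define q where "q = sqrt (max 0 (1 - 1/\<kappa>))"
  have conv: "x \<longlonglongrightarrow> p"
    if P: "\<And>j c. c \<in> C \<Longrightarrow> inner c (F p) \<le> inner c (F (x j))" for p
  proof (rule contr_conv)
    show "0 \<le> q" by (simp add: q_def)
    have "max 0 (1 - 1/\<kappa>) < 1" using kpos by simp
    then show "q < 1" by (simp add: q_def)
    fix k
    have "(1 - 1/\<kappa>) * (norm (x k - p))\<^sup>2 \<le> max 0 (1 - 1/\<kappa>) * (norm (x k - p))\<^sup>2"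
      by (intro mult_right_mono) auto
    then show "norm (x (Suc k) - p) \<le> q * norm (x k - p)"
      unfolding q_def using key[OF P, of k] by (intro sqrt_step) auto
  qed
  define S where "S = (\<lambda>j. {z. \<forall>c\<in>C. inner c (F z) \<le> inner c (F (x j))})"
  have contF: "continuous_on UNIV F"
    using deriv has_derivative_continuous by (blast intro: continuous_at_imp_continuous_on)
  have contg: "continuous_on UNIV (\<lambda>z. inner c (F z))" for c
    by (intro continuous_on_inner continuous_on_const contF)
  have Sclosed: "closed (S j)" for j
  proof -
    have "S j = (\<Inter>c\<in>C. {z. inner c (F z) \<le> inner c (F (x j))})" by (auto simp: S_def)
    then show ?thesis by (simp only:) (intro closed_INT ballI closed_Collect_le contg continuous_on_const)
  qed
  have Smono: "S n \<subseteq> S m" if "m \<le> n" for m n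
  proof
    fix z assume "z \<in> S n"
    then have "\<forall>c\<in>C. inner c (F z) \<le> inner c (F (x m))"
      using descm[OF _ that] unfolding S_def by (metis (mono_tags, lifting) mem_Collect_eq order_trans)
    then show "z \<in> S m" by (simp add: S_def)
  qed
  have Sne: "S j \<noteq> {}" for j using S_def by auto
  have S0bdd: "bounded (S 0)"
  proof -
    obtain B where B: "B > 0" "\<And>v. norm (JF (x 0) v) \<le> norm v * B"
      using bounded_linear.pos_bounded[OF has_derivative_bounded_linear[OF deriv]] by blast
    define m where "m = inner c0 \<mu>"
    have m: "m > 0" using kap(2)[OF c0C] by (simp add: m_def)
    have "norm z \<le> norm (x 0) + 2 * norm c0 * B / m" if z: "z \<in> S 0" for z
    proof -
      define v where "v = z - x 0"
      have "0 \<le> inner c0 (F z - F (x 0) - (JF (x 0) v + ((1/2) * (norm v)\<^sup>2) *\<^sub>R \<mu>))"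
        using sconv dual_le[OF c0C] by (auto simp: strongly_K_convex_def Kle_def v_def)
      then have "inner c0 (JF (x 0) v) + (1/2) * (norm v)\<^sup>2 * m \<le> inner c0 (F z) - inner c0 (F (x 0))"
        by (simp add: inner_diff_right inner_add_right m_def)
      also have "\<dots> \<le> 0" using z c0C by (auto simp: S_def)
      finally have h1: "(1/2) * (norm v)\<^sup>2 * m \<le> - inner c0 (JF (x 0) v)" by simp
      have "- inner c0 (JF (x 0) v) \<le> norm c0 * norm (JF (x 0) v)"
        using norm_cauchy_schwarz[of "-c0" "JF (x 0) v"] by simp
      also have "\<dots> \<le> norm c0 * (norm v * B)" using B by (intro mult_left_mono) auto
      finally have h3: "- inner c0 (JF (x 0) v) \<le> norm c0 * (norm v * B)" .
      have q1: "norm v * ((1/2) * norm v * m) = (1/2) * (norm v)\<^sup>2 * m" by (simp add: power2_eq_square mult_ac)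
      have q2: "norm c0 * (norm v * B) = norm v * (norm c0 * B)" by (simp add: mult_ac)
      have h2: "(norm v) * ((1/2) * norm v * m) \<le> (norm v) * (norm c0 * B)"
        using h1 h3 q1 q2 by linarith
      have "norm v \<le> 2 * norm c0 * B / m"
      proof (cases "norm v = 0")
        case True then show ?thesis using B m by simp
      next
        case False
        then have "(1/2) * norm v * m \<le> norm c0 * B" using h2 by (simp add: mult_le_cancel_left)
        then show ?thesis using m by (simp add: field_simps)
      qed
      moreover have "norm z \<le> norm (x 0) + norm v"
        using norm_triangle_ineq[of "x 0" v] by (simp add: v_def)
      ultimately show ?thesis by linarith
    qed
    then show ?thesis unfolding bounded_iff by blast
  qed
  have Scomp: "compact (S j)" for j
  proof -
    have "bounded (S j)" by (rule bounded_subset[OF S0bdd Smono]) simp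
    then show ?thesis using Sclosed[of j] by (simp add: compact_eq_bounded_closed)
  qed
  have "\<Inter>(range S) \<noteq> {}" by (rule compact_nest[OF Scomp Sne Smono])
  then obtain p where p: "p \<in> \<Inter>(range S)" by blast
  have Pp: "inner c (F p) \<le> inner c (F (x j))" if "c \<in> C" for c j
  proof -
    have "p \<in> S j" using p by blast
    then show ?thesis using that by (simp add: S_def)
  qed
  have lim: "x \<longlonglongrightarrow> p" by (rule conv) (rule Pp)
  have eff: "efficient K F p"
    unfolding efficient_def
  proof
    assume "\<exists>y. Kle K (F y) (F p) \<and> F y \<noteq> F p"
    then obtain y where y: "Kle K (F y) (F p)" "F y \<noteq> F p" by blast
    have Py: "inner c (F y) \<le> inner c (F (x j))" if "c \<in> C" for c j
    proof -
      have "0 \<le> inner c (F p - F y)" using dual_le[OF that] y(1) by (simp add: Kle_def)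
      then show ?thesis using Pp[OF that, of j] by (simp add: inner_diff_right)
    qed
    have "x \<longlonglongrightarrow> y" by (rule conv) (rule Py)
    then have "y = p" using LIMSEQ_unique[OF lim] by simp
    then show False using y by simp
  qed
  have rate: "norm (x (Suc k) - p) \<le> sqrt (1 - 1 / kappa K l \<mu>) * norm (x k - p)" for k
    using key[OF Pp] unfolding \<kappa>_def by (intro sqrt_step) auto
  show ?thesis using lim eff rate by blast
qed
end
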